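(* Let $x_1,\ldots,x_n\in\mathcal{X}$ be fixed points, $f$ a real function on $\mathcal{X}$, $h=(h_1,\ldots,h_m)^T$ real functions on $\mathcal{X}$, $\beta^\star\in\mathbb{R}^m$ with support $S^\star=\{k:\beta^\star_k\ne0\}$ of cardinality $\ell^\star\ge1$, $\overline{S^\star}=\{1,\ldots,m\}\setminus S^\star$, and $\lambda>0$. Let $H_c$ be the $n\times m$ column-centered matrix with entries $h_j(x_i)-n^{-1}\sum_{r}h_j(x_r)$, $H_{c,k}$ its $k$-th column, $H_{c,S^\star}$ the $n\times\ell^\star$ submatrix of columns indexed by $S^\star$, $f_c^{(n)}$ the centered vector with entries $f(x_i)-n^{-1}\sum_rf(x_r)$, and $\epsilon_c^{(n)}=f_c^{(n)}-H_c\beta^\star$. Suppose there exists $\nu>0$ such that $\|H_{c,S^\star}u\|_2^2\ge n\nu\|u\|_2^2$ for all $u\in\mathbb{R}^{\ell^\star}$, and there exists $\kappa\in(0,1]$ such that $$\frac{\ell^\star}{\nu n}\max_{k\in\overline{S^\star}}\max_{j\in S^\star}|H_{c,j}^TH_{c,k}|\le1-\kappa,\qquad\max_{k=1,\ldots,m}|H_{c,k}^T\epsilon_c^{(n)}|\le\tfrac12\kappa\lambda n.$$ Then the minimizer $\hat\beta^{\mathrm{lasso}}$ of $\beta\mapsto\frac{1}{2n}\|f_c^{(n)}-H_c\beta\|_2^2+\lambda\|\beta\|_1$ over $\mathbb{R}^m$ is unique, satisfies $\operatorname{supp}(\hat\beta^{\mathrm{lasso}})\subset S^\star$, and $$\max_{k\in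 S^\star}|\hat\beta^{\mathrm{lasso}}_k-\beta^\star_k|\le(1+\kappa/2)\sqrt{\ell^\star}\,\lambda/\nu.$$
   Context: $\operatorname{supp}(\beta)=\{j:\beta_j\neq0\}$. No probabilistic structure is involved: all quantities are deterministic. *)

theory Defs
  imports "HOL-Analysis.Analysis"
begin

text \<open>Points are x 0, ..., x (n-1); functions h 0, ..., h (m-1).
  Vectors in R^m are functions nat => real vanishing outside {..<m}.\<close>

definition Hc :: "nat \<Rightarrow> (nat \<Rightarrow> 'a) \<Rightarrow> (nat \<Rightarrow> 'a \<Rightarrow> real) \<Rightarrow> nat \<Rightarrow> nat \<Rightarrow> real" where
  "Hc n x h i k = h k (x i) - (\<Sum>r<n. h k (x r)) / real n"

definition fc :: "nat \<Rightarrow> (nat \<Rightarrow> 'a) \<Rightarrow> ('a \<Rightarrow> real) \<Rightarrow> nat \<Rightarrow> real" where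
  "fc n x f i = f (x i) - (\<Sum>r<n. f (x r)) / real n"

definition supp :: "(nat \<Rightarrow> real) \<Rightarrow> nat set" where
  "supp \<beta> = {j. \<beta> j \<noteq> 0}"

definition vecs :: "nat \<Rightarrow> (nat \<Rightarrow> real) set" where
  "vecs m = {\<beta>. \<forall>k\<ge>m. \<beta> k = 0}"

definition lasso_obj :: "nat \<Rightarrow> nat \<Rightarrow> (nat \<Rightarrow> 'a) \<Rightarrow> ('a \<Rightarrow> real) \<Rightarrow> (nat \<Rightarrow> 'a \<Rightarrow> real)
    \<Rightarrow> real \<Rightarrow> (nat \<Rightarrow> real) \<Rightarrow> real" where
  "lasso_obj n m x f h lam \<beta> =
     (\<Sum>i<n. (fc n x f i - (\<Sum>k<m. Hc n x h i k * \<beta> k))\<^sup>2) / (2 * real n)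
     + lam * (\<Sum>k<m. \<bar>\<beta> k\<bar>)"

definition is_lasso_min where
  "is_lasso_min n m x f h lam \<beta> \<longleftrightarrow> \<beta> \<in> vecs m \<and>
     (\<forall>\<gamma>\<in>vecs m. lasso_obj n m x f h lam \<beta> \<le> lasso_obj n m x f h lam \<gamma>)"

end

theory Submission
  imports Defs
begin


lemma exists_min_K:
  fixes F :: "(nat \<Rightarrow> real) \<Rightarrow> real"
  assumes "continuous_on UNIV F" "R \<ge> 0"
  shows "\<exists>b\<in>PiE UNIV (\<lambda>k. if k \<in> S then {-R..R} else {0}).
           \<forall>c\<in>PiE UNIV (\<lambda>k. if k \<in> S then {-R..R} else {0}). F b \<le> F c"
proof -
  let ?K = "PiE UNIV (\<lambda>k. if k \<in> S then {-R..R} else {0::real})"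
  have "compactin (product_topology (\<lambda>i. euclidean) UNIV) ?K"
    by (subst compactin_PiE) auto
  hence "compact ?K" by (simp add: euclidean_product_topology)
  moreover have "(\<lambda>k. 0) \<in> ?K" using assms by auto
  hence "?K \<noteq> {}" by blast
  moreover have "continuous_on ?K F" using assms(1) continuous_on_subset by blast
  ultimately show ?thesis using continuous_attains_inf by blast
qed

lemma cont_obj:
  fixes y :: "nat \<Rightarrow> real" and H :: "nat \<Rightarrow> nat \<Rightarrow> real"
  shows "continuous_on UNIV (\<lambda>b. (\<Sum>i<n. (y i - (\<Sum>k<m. H i k * b k))\<^sup>2) / (2 * real n) + lam * (\<Sum>k<m. \<bar>b k\<bar>))"
  unfolding divide_inverse by (intro continuous_intros continuous_on_product_coordinates)

lemma quad_expand:
  fixes y :: "nat \<Rightarrow> real" and H :: "nat \<Rightarrow> nat \<Rightarrow> real"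
  shows "(\<Sum>i<n. (y i - (\<Sum>k<m. H i k * (b k + d k)))\<^sup>2) =
    (\<Sum>i<n. (y i - (\<Sum>k<m. H i k * b k))\<^sup>2)
    - 2 * (\<Sum>k<m. d k * (\<Sum>i<n. H i k * (y i - (\<Sum>j<m. H i j * b j))))
    + (\<Sum>i<n. (\<Sum>k<m. H i k * d k)\<^sup>2)"
proof -
  have e1: "(\<Sum>k<m. H i k * (b k + d k)) = (\<Sum>k<m. H i k * b k) + (\<Sum>k<m. H i k * d k)" for i
    by (simp add: distrib_left sum.distrib)
  have e2: "(\<Sum>k<m. d k * (\<Sum>i<n. H i k * (y i - (\<Sum>j<m. H i j * b j))))
      = (\<Sum>i<n. (y i - (\<Sum>j<m. H i j * b j)) * (\<Sum>k<m. H i k * d k))"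
    by (simp add: sum_distrib_left sum_distrib_right sum.swap[of _ "{..<m}"] mult_ac)
  show ?thesis unfolding e1 e2
    by (simp add: power2_eq_square algebra_simps sum.distrib sum_subtractf sum_distrib_left)
qed



lemma small_t:
  fixes X A :: real
  assumes "A \<ge> 0" "\<And>t. 0 < t \<Longrightarrow> t \<le> 1 \<Longrightarrow> X + t * A \<ge> 0"
  shows "X \<ge> 0"
proof (rule ccontr)
  assume "\<not> X \<ge> 0"
  hence X: "X < 0" by simp
  define t where "t = min 1 (-X / (2 * (A + 1)))"
  have p: "-X / (2 * (A + 1)) > 0" using X assms(1) by (intro divide_pos_pos) auto
  have t0: "0 < t" "t \<le> 1" using p by (auto simp: t_def)
  have "t * A \<le> (-X / (2 * (A + 1))) * A"
    using assms(1) by (intro mult_right_mono) (auto simp: t_def)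
  also have "\<dots> = (-X) * (A / (2 * (A + 1)))" by simp
  also have "\<dots> < -X"
  proof -
    have "A / (2 * (A + 1)) < 1" using assms(1) by (simp add: divide_less_eq)
    from mult_strict_left_mono[OF this, of "-X"] X show ?thesis by simp
  qed
  finally show False using assms(2)[OF t0] by simp
qed

lemma vi:
  fixes y :: "nat \<Rightarrow> real" and H :: "nat \<Rightarrow> nat \<Rightarrow> real" and n m :: nat and lam :: real
  defines "L \<equiv> \<lambda>b. (\<Sum>i<n. (y i - (\<Sum>k<m. H i k * b k))\<^sup>2) / (2 * real n) + lam * (\<Sum>k<m. \<bar>b k\<bar>)"
  assumes n: "n > 0" and lam: "lam \<ge> 0"
    and minS: "\<And>b. (\<forall>k. k \<notin> S \<longrightarrow> b k = 0) \<Longrightarrow> L bh \<le> L b"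
    and bhS: "\<forall>k. k \<notin> S \<longrightarrow> bh k = 0"
    and dS: "\<forall>k. k \<notin> S \<longrightarrow> d k = 0"
  shows "0 \<le> - (\<Sum>k<m. d k * (\<Sum>i<n. H i k * (y i - (\<Sum>j<m. H i j * bh j))))
     + real n * lam * ((\<Sum>k<m. \<bar>bh k + d k\<bar>) - (\<Sum>k<m. \<bar>bh k\<bar>))"
proof -
  define c where "c k = (\<Sum>i<n. H i k * (y i - (\<Sum>j<m. H i j * bh j)))" for k
  define A where "A = (\<Sum>i<n. (\<Sum>k<m. H i k * d k)\<^sup>2)"
  define Q where "Q b = (\<Sum>i<n. (y i - (\<Sum>k<m. H i k * b k))\<^sup>2)" for b
  define N1 where "N1 b = (\<Sum>k<m. \<bar>b k\<bar>)" for b :: "nat \<Rightarrow> real"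
  define X where "X = - (\<Sum>k<m. d k * c k) + real n * lam * (N1 (\<lambda>k. bh k + d k) - N1 bh)"
  have A0: "A \<ge> 0" unfolding A_def by (intro sum_nonneg) simp
  have Xt: "X + t * (A / 2) \<ge> 0" if t: "0 < t" "t \<le> 1" for t
  proof -
    have "L bh \<le> L (\<lambda>k. bh k + t * d k)" using bhS dS by (intro minS) auto
    moreover have "Q (\<lambda>k. bh k + t * d k) = Q bh - 2 * t * (\<Sum>k<m. d k * c k) + t\<^sup>2 * A"
    proof -
      have "Q (\<lambda>k. bh k + t * d k) = Q bh - 2 * (\<Sum>k<m. (t * d k) * c k) + (\<Sum>i<n. (\<Sum>k<m. H i k * (t * d k))\<^sup>2)"
        unfolding Q_def c_def by (rule quad_expand)
      moreover have "(\<Sum>k<m. (t * d k) * c k) = t * (\<Sum>k<m. d k * c k)"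
        by (simp add: sum_distrib_left mult_ac)
      moreover have "(\<Sum>i<n. (\<Sum>k<m. H i k * (t * d k))\<^sup>2) = t\<^sup>2 * A"
      proof -
        have eq: "(\<Sum>k<m. H i k * (t * d k)) = t * (\<Sum>k<m. H i k * d k)" for i
          by (simp add: sum_distrib_left mult_ac)
        show ?thesis unfolding A_def sum_distrib_left
          by (rule sum.cong) (simp_all only: eq power_mult_distrib)
      qed
      ultimately show ?thesis by simp
    qed
    moreover have "N1 (\<lambda>k. bh k + t * d k) \<le> (1 - t) * N1 bh + t * N1 (\<lambda>k. bh k + d k)"
    proof -
      have "\<bar>bh k + t * d k\<bar> \<le> (1 - t) * \<bar>bh k\<bar> + t * \<bar>bh k + d k\<bar>" for k
      proof -
        have "bh k + t * d k = (1 - t) * bh k + t * (bh k + d k)" by (simp add: algebra_simps)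
        also have "\<bar>\<dots>\<bar> \<le> \<bar>(1 - t) * bh k\<bar> + \<bar>t * (bh k + d k)\<bar>" by (rule abs_triangle_ineq)
        also have "\<dots> = (1 - t) * \<bar>bh k\<bar> + t * \<bar>bh k + d k\<bar>" using t by (simp add: abs_mult)
        finally show ?thesis .
      qed
      hence "N1 (\<lambda>k. bh k + t * d k) \<le> (\<Sum>k<m. (1 - t) * \<bar>bh k\<bar> + t * \<bar>bh k + d k\<bar>)"
        unfolding N1_def by (intro sum_mono) auto
      thus ?thesis by (simp add: N1_def sum.distrib sum_distrib_left)
    qed
    ultimately have "0 \<le> (- 2 * t * (\<Sum>k<m. d k * c k) + t\<^sup>2 * A) / (2 * real n)
        + lam * (t * (N1 (\<lambda>k. bh k + d k) - N1 bh))"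
    proof -
      assume a: "L bh \<le> L (\<lambda>k. bh k + t * d k)"
        "Q (\<lambda>k. bh k + t * d k) = Q bh - 2 * t * (\<Sum>k<m. d k * c k) + t\<^sup>2 * A"
        "N1 (\<lambda>k. bh k + t * d k) \<le> (1 - t) * N1 bh + t * N1 (\<lambda>k. bh k + d k)"
      have Lf: "L b = Q b / (2 * real n) + lam * N1 b" for b
        unfolding L_def Q_def N1_def by simp
      have "lam * N1 (\<lambda>k. bh k + t * d k) \<le> lam * ((1 - t) * N1 bh + t * N1 (\<lambda>k. bh k + d k))"
        using a(3) lam by (rule mult_left_mono)
      have "lam * ((1 - t) * N1 bh + t * N1 (\<lambda>k. bh k + d k)) = lam * N1 bh + lam * (t * (N1 (\<lambda>k. bh k + d k) - N1 bh))"
        by (simp add: algebra_simps)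
      moreover have "Q (\<lambda>k. bh k + t * d k) / (2 * real n) = Q bh / (2 * real n) + (Q (\<lambda>k. bh k + t * d k) - Q bh) / (2 * real n)"
        by (simp add: diff_divide_distrib)
      ultimately have "0 \<le> (Q (\<lambda>k. bh k + t * d k) - Q bh) / (2 * real n) + lam * (t * (N1 (\<lambda>k. bh k + d k) - N1 bh))"
        using a(1) \<open>lam * N1 (\<lambda>k. bh k + t * d k) \<le> _\<close> unfolding Lf by linarith
      moreover have Qeq: "Q (\<lambda>k. bh k + t * d k) - Q bh = - 2 * t * (\<Sum>k<m. d k * c k) + t\<^sup>2 * A"
        using a(2) by simp
      ultimately show ?thesis by (simp only: Qeq)
    qed
    hence "0 \<le> 2 * real n * ((- 2 * t * (\<Sum>k<m. d k * c k) + t\<^sup>2 * A) / (2 * real n)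
        + lam * (t * (N1 (\<lambda>k. bh k + d k) - N1 bh)))" using n by (intro mult_nonneg_nonneg) auto
    also have "\<dots> = (- 2 * t * (\<Sum>k<m. d k * c k) + t\<^sup>2 * A) + 2 * real n * (lam * (t * (N1 (\<lambda>k. bh k + d k) - N1 bh)))"
      using n by (simp add: distrib_left)
    also have "\<dots> = 2 * t * (X + t * (A / 2))"
      unfolding X_def by (simp add: algebra_simps power2_eq_square)
    finally show ?thesis using t by (simp add: zero_le_mult_iff)
  qed
  have "X \<ge> 0" using A0 by (intro small_t[of "A/2" X, OF _ Xt]) auto
  thus ?thesis by (simp add: X_def c_def N1_def)
qed



lemma split_sum:
  fixes g :: "nat \<Rightarrow> real"
  assumes "S \<subseteq> {..<m}"
  shows "(\<Sum>k<m. g k) = (\<Sum>k\<in>S. g k) + (\<Sum>k\<in>{..<m} - S. g k)"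
  using sum.subset_diff[OF assms, of g] by simp

lemma quad_id:
  fixes H :: "nat \<Rightarrow> nat \<Rightarrow> real"
  shows "(\<Sum>j\<in>S. D j * (\<Sum>l\<in>S. (\<Sum>i<n. H i l * H i j) * D l)) = (\<Sum>i<n. (\<Sum>j\<in>S. H i j * D j)\<^sup>2)"
proof -
  have "(\<Sum>j\<in>S. D j * (\<Sum>l\<in>S. (\<Sum>i<n. H i l * H i j) * D l))
      = (\<Sum>j\<in>S. \<Sum>l\<in>S. \<Sum>i<n. (H i j * D j) * (H i l * D l))"
    by (simp add: sum_distrib_left sum_distrib_right mult_ac)
  also have "\<dots> = (\<Sum>j\<in>S. \<Sum>i<n. \<Sum>l\<in>S. (H i j * D j) * (H i l * D l))"
    by (rule sum.cong[OF refl], rule sum.swap)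
  also have "\<dots> = (\<Sum>i<n. \<Sum>j\<in>S. \<Sum>l\<in>S. (H i j * D j) * (H i l * D l))"
    by (rule sum.swap)
  also have "\<dots> = (\<Sum>i<n. (\<Sum>j\<in>S. H i j * D j)\<^sup>2)"
    by (simp add: power2_eq_square sum_product)
  finally show ?thesis .
qed



lemma delta1:
  fixes c :: "nat \<Rightarrow> real"
  assumes "j < m"
  shows "(\<Sum>k<m. (if k = j then s else 0) * c k) = s * c j"
proof -
  have "(\<Sum>k<m. (if k = j then s else 0) * c k) = (\<Sum>k<m. if k = j then s * c k else 0)"
    by (rule sum.cong) auto
  thus ?thesis using assms by simp
qed

lemma delta2:
  fixes b :: "nat \<Rightarrow> real"
  assumes "j < m"
  shows "(\<Sum>k<m. \<bar>b k + (if k = j then s else 0)\<bar>) - (\<Sum>k<m. \<bar>b k\<bar>) = \<bar>b j + s\<bar> - \<bar>b j\<bar>"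
proof -
  have "(\<Sum>k<m. \<bar>b k + (if k = j then s else 0)\<bar>) - (\<Sum>k<m. \<bar>b k\<bar>)
     = (\<Sum>k<m. \<bar>b k + (if k = j then s else 0)\<bar> - \<bar>b k\<bar>)"
    by (simp add: sum_subtractf)
  also have "\<dots> = (\<Sum>k<m. if k = j then \<bar>b k + s\<bar> - \<bar>b k\<bar> else 0)"
    by (rule sum.cong) auto
  finally show ?thesis using assms by simp
qed

lemma main:
  fixes H :: "nat \<Rightarrow> nat \<Rightarrow> real" and y :: "nat \<Rightarrow> real" and \<beta>s :: "nat \<Rightarrow> real"
    and n m :: nat and lam \<nu> \<kappa> :: real
  defines "L \<equiv> \<lambda>b. (\<Sum>i<n. (y i - (\<Sum>k<m. H i k * b k))\<^sup>2) / (2 * real n) + lam * (\<Sum>k<m. \<bar>b k\<bar>)"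
  assumes n_pos: "n \<ge> 1"
    and \<beta>s_vec: "\<beta>s \<in> vecs m"
    and l_pos: "card (supp \<beta>s) \<ge> 1"
    and lam_pos: "lam > 0"
    and nu_pos: "\<nu> > 0"
    and eig: "\<forall>u :: nat \<Rightarrow> real.
       (\<Sum>i<n. (\<Sum>j\<in>supp \<beta>s. H i j * u j)\<^sup>2)
         \<ge> real n * \<nu> * (\<Sum>j\<in>supp \<beta>s. (u j)\<^sup>2)"
    and kappa: "0 < \<kappa>" "\<kappa> \<le> 1"
    and incoh: "\<forall>k\<in>{..<m} - supp \<beta>s. \<forall>j\<in>supp \<beta>s.
       real (card (supp \<beta>s)) / (\<nu> * real n) * \<bar>\<Sum>i<n. H i j * H i k\<bar> \<le> 1 - \<kappa>"
    and noise: "\<forall>k<m. \<bar>\<Sum>i<n. H i k *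
        (y i - (\<Sum>j<m. H i j * \<beta>s j))\<bar> \<le> \<kappa> * lam * real n / 2"
  shows "\<exists>\<beta>. (\<beta> \<in> vecs m \<and> (\<forall>\<gamma>\<in>vecs m. L \<beta> \<le> L \<gamma>))
     \<and> (\<forall>\<gamma>. (\<gamma> \<in> vecs m \<and> (\<forall>\<gamma>'\<in>vecs m. L \<gamma> \<le> L \<gamma>')) \<longrightarrow> \<gamma> = \<beta>)
     \<and> supp \<beta> \<subseteq> supp \<beta>s
     \<and> (\<forall>k\<in>supp \<beta>s. \<bar>\<beta> k - \<beta>s k\<bar>
          \<le> (1 + \<kappa> / 2) * sqrt (real (card (supp \<beta>s))) * lam / \<nu>)"
proof -
  define S where "S = supp \<beta>s"
  define l where "l = real (card S)"
  have Sm: "S \<subseteq> {..<m}" using \<beta>s_vec unfolding S_def supp_def vecs_def by (auto, meson not_le)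
  hence finS: "finite S" using finite_subset by blast
  have l_pos': "l \<ge> 1" using l_pos by (simp add: l_def S_def)
  have n_pos': "real n > 0" using n_pos by simp
  have \<beta>sS: "\<forall>k. k \<notin> S \<longrightarrow> \<beta>s k = 0" by (simp add: S_def supp_def)
  have L0: "L b \<ge> lam * (\<Sum>k<m. \<bar>b k\<bar>)" for b
    unfolding L_def using n_pos' by (intro add_increasing order_refl divide_nonneg_pos sum_nonneg) auto
  define R where "R = L (\<lambda>k. 0) / lam"
  have R0: "R \<ge> 0" unfolding R_def using L0[of "\<lambda>k. 0"] lam_pos by simp
  define K where "K = PiE UNIV (\<lambda>k. if k \<in> S then {-R..R} else {0::real})"
  have contL: "continuous_on UNIV L" unfolding L_def by (rule cont_obj)
  obtain bh where bhK: "bh \<in> K" and bhmin: "\<forall>c\<in>K. L bh \<le> L c"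
    using exists_min_K[OF contL R0, of S] unfolding K_def by blast
  have bhS: "\<forall>k. k \<notin> S \<longrightarrow> bh k = 0" using bhK by (auto simp: K_def PiE_iff split: if_splits)
  have zK: "(\<lambda>k. 0) \<in> K" using R0 by (auto simp: K_def PiE_iff split: if_splits)
  have minS: "L bh \<le> L b" if bS: "\<forall>k. k \<notin> S \<longrightarrow> b k = 0" for b
  proof (cases "b \<in> K")
    case True thus ?thesis using bhmin by blast
  next
    case False
    have "\<exists>k\<in>S. \<bar>b k\<bar> > R"
    proof (rule ccontr)
      assume "\<not> ?thesis"
      hence "\<forall>k\<in>S. \<bar>b k\<bar> \<le> R" by auto
      hence "b \<in> K" using bS by (auto simp: K_def PiE_iff abs_le_iff)
      with False show False by simp
    qed
    then obtain k where k: "k \<in> S" "\<bar>b k\<bar> > R" by blast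
    have "L bh \<le> L (\<lambda>k. 0)" using bhmin zK by blast
    also have "\<dots> = lam * R" using lam_pos by (simp add: R_def)
    also have "\<dots> < lam * \<bar>b k\<bar>" using k lam_pos by simp
    also have "\<dots> \<le> lam * (\<Sum>k<m. \<bar>b k\<bar>)"
      using k Sm lam_pos by (intro mult_left_mono member_le_sum) auto
    also have "\<dots> \<le> L b" by (rule L0)
    finally show ?thesis by simp
  qed
  define c where "c k = (\<Sum>i<n. H i k * (y i - (\<Sum>j<m. H i j * bh j)))" for k
  define e where "e k = (\<Sum>i<n. H i k * (y i - (\<Sum>j<m. H i j * \<beta>s j)))" for k
  define D where "D k = bh k - \<beta>s k" for k
  define M where "M j k = (\<Sum>i<n. H i j * H i k)" for j k
  have DS: "\<forall>k. k \<notin> S \<longrightarrow> D k = 0" using bhS \<beta>sS by (simp add: D_def)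
  have cdec: "c k = e k - (\<Sum>j\<in>S. M j k * D j)" for k
  proof -
    have "(\<Sum>j<m. H i j * bh j) = (\<Sum>j<m. H i j * \<beta>s j) + (\<Sum>j<m. H i j * D j)" for i
      by (simp add: D_def algebra_simps sum.distrib sum_subtractf)
    moreover have "(\<Sum>j<m. H i j * D j) = (\<Sum>j\<in>S. H i j * D j)" for i
      using split_sum[OF Sm, of "\<lambda>j. H i j * D j"] DS by simp
    ultimately have "c k = (\<Sum>i<n. H i k * (y i - (\<Sum>j<m. H i j * \<beta>s j)) - H i k * (\<Sum>j\<in>S. H i j * D j))"
      unfolding c_def by (simp add: algebra_simps)
    also have "\<dots> = e k - (\<Sum>i<n. \<Sum>j\<in>S. H i k * H i j * D j)"
      by (simp add: e_def sum_subtractf sum_distrib_left mult_ac)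
    also have "(\<Sum>i<n. \<Sum>j\<in>S. H i k * H i j * D j) = (\<Sum>j\<in>S. \<Sum>i<n. H i k * H i j * D j)"
      by (rule sum.swap)
    also have "\<dots> = (\<Sum>j\<in>S. M j k * D j)"
      by (simp add: M_def sum_distrib_left sum_distrib_right mult_ac)
    finally show ?thesis .
  qed
  have bhm: "bh \<in> vecs m" using bhS Sm by (auto simp: vecs_def)
  have VI: "0 \<le> - (\<Sum>k<m. d k * c k) + real n * lam * ((\<Sum>k<m. \<bar>bh k + d k\<bar>) - (\<Sum>k<m. \<bar>bh k\<bar>))"
    if dS: "\<forall>k. k \<notin> S \<longrightarrow> d k = 0" for d
    unfolding c_def
    by (rule vi[where S=S]) (use n_pos' lam_pos minS[unfolded L_def] bhS dS in auto)
  have cS: "\<bar>c j\<bar> \<le> real n * lam" if j: "j \<in> S" for j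
  proof -
    have jm: "j < m" using j Sm by auto
    have "s * c j \<le> real n * lam" if s: "\<bar>s\<bar> = 1" for s
    proof -
      have "0 \<le> - (s * c j) + real n * lam * (\<bar>bh j + s\<bar> - \<bar>bh j\<bar>)"
        using VI[of "\<lambda>k. if k = j then s else 0"] j unfolding delta1[OF jm] delta2[OF jm] by auto
      moreover have "\<bar>bh j + s\<bar> - \<bar>bh j\<bar> \<le> 1" using s abs_triangle_ineq[of "bh j" s] by simp
      moreover have "real n * lam \<ge> 0" using n_pos' lam_pos by simp
      ultimately have "real n * lam * (\<bar>bh j + s\<bar> - \<bar>bh j\<bar>) \<le> real n * lam * 1"
        by (intro mult_left_mono) auto
      with \<open>0 \<le> - (s * c j) + _\<close> show ?thesis by linarith
    qed
    from this[of 1] this[of "-1"] show ?thesis by auto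
  qed
  define B where "B = real n * lam * (1 + \<kappa> / 2)"
  define D2 where "D2 = (\<Sum>j\<in>S. (D j)\<^sup>2)"
  define Bd where "Bd = (1 + \<kappa> / 2) * sqrt l * lam / \<nu>"
  have B0: "B \<ge> 0" using n_pos' lam_pos kappa by (simp add: B_def)
  have D20: "D2 \<ge> 0" unfolding D2_def by (intro sum_nonneg) auto
  have Bd0: "Bd \<ge> 0" using lam_pos kappa nu_pos l_pos' by (simp add: Bd_def)
  have wS: "\<bar>\<Sum>l\<in>S. M l j * D l\<bar> \<le> B" if j: "j \<in> S" for j
  proof -
    have "(\<Sum>l\<in>S. M l j * D l) = e j - c j" using cdec[of j] by simp
    moreover have "\<bar>e j\<bar> \<le> \<kappa> * lam * real n / 2" using noise j Sm by (auto simp: e_def)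
    moreover note cS[OF j]
    ultimately show ?thesis unfolding B_def by (simp add: algebra_simps)
  qed
  have quad: "real n * \<nu> * D2 \<le> (\<Sum>j\<in>S. D j * (\<Sum>l\<in>S. M l j * D l))"
    using eig[rule_format, of D] unfolding quad_id M_def D2_def S_def by simp
  have "(\<Sum>j\<in>S. D j * (\<Sum>l\<in>S. M l j * D l))\<^sup>2 \<le> D2 * (\<Sum>j\<in>S. (\<Sum>l\<in>S. M l j * D l)\<^sup>2)"
    unfolding D2_def by (rule Cauchy_Schwarz_ineq_sum)
  also have "\<dots> \<le> D2 * (l * B\<^sup>2)"
  proof (intro mult_left_mono D20)
    have "(\<Sum>j\<in>S. (\<Sum>l\<in>S. M l j * D l)\<^sup>2) \<le> (\<Sum>j\<in>S. B\<^sup>2)"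
      by (intro sum_mono power2_le_iff_abs_le[THEN iffD2] B0 wS)
    thus "(\<Sum>j\<in>S. (\<Sum>l\<in>S. M l j * D l)\<^sup>2) \<le> l * B\<^sup>2" by (simp add: l_def)
  qed
  finally have CS1: "(\<Sum>j\<in>S. D j * (\<Sum>l\<in>S. M l j * D l))\<^sup>2 \<le> D2 * (l * B\<^sup>2)" .
  have nuD: "real n * \<nu> * D2 \<ge> 0" using n_pos' nu_pos D20 by simp
  have "(real n * \<nu> * D2)\<^sup>2 \<le> D2 * (l * B\<^sup>2)"
    using power_mono[OF quad nuD, of 2] CS1 by linarith
  hence D2le: "D2 \<le> Bd\<^sup>2"
  proof -
    assume a: "(real n * \<nu> * D2)\<^sup>2 \<le> D2 * (l * B\<^sup>2)"
    have Bd2: "Bd\<^sup>2 = l * B\<^sup>2 / (real n * \<nu>)\<^sup>2"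
      using l_pos' n_pos' nu_pos by (simp add: Bd_def B_def power_mult_distrib power_divide)
    show ?thesis
    proof (cases "D2 = 0")
      case True thus ?thesis by simp
    next
      case False
      hence "D2 > 0" using D20 by simp
      have "D2 * (real n * \<nu>)\<^sup>2 \<le> l * B\<^sup>2"
        using a \<open>D2 > 0\<close> by (simp add: power_mult_distrib power2_eq_square mult_ac)
      thus ?thesis unfolding Bd2 using n_pos' nu_pos by (simp add: pos_le_divide_eq)
    qed
  qed
  have Dk: "\<bar>D k\<bar> \<le> Bd" if k: "k \<in> S" for k
  proof -
    have "(D k)\<^sup>2 \<le> D2" unfolding D2_def using finS k by (intro member_le_sum) auto
    hence "\<bar>D k\<bar>\<^sup>2 \<le> Bd\<^sup>2" using D2le by simp
    thus ?thesis using Bd0 by (rule power2_le_imp_le)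
  qed
  define T where "T = l * (1 + \<kappa> / 2) * lam / \<nu>"
  have T0: "T \<ge> 0" using lam_pos kappa nu_pos l_pos' by (simp add: T_def)
  have sumD: "(\<Sum>j\<in>S. \<bar>D j\<bar>) \<le> T"
  proof -
    have "(\<Sum>j\<in>S. 1 * \<bar>D j\<bar>)\<^sup>2 \<le> (\<Sum>j\<in>S. 1\<^sup>2) * (\<Sum>j\<in>S. \<bar>D j\<bar>\<^sup>2)"
      by (rule Cauchy_Schwarz_ineq_sum)
    hence "(\<Sum>j\<in>S. \<bar>D j\<bar>)\<^sup>2 \<le> l * D2" by (simp add: l_def D2_def)
    also have "\<dots> \<le> l * Bd\<^sup>2" using D2le l_pos' by simp
    also have "\<dots> = T\<^sup>2"
      using l_pos' by (simp add: Bd_def T_def power_mult_distrib power_divide power2_eq_square)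
    finally show ?thesis using T0 by (rule power2_le_imp_le)
  qed
  have cN: "\<bar>c k\<bar> < real n * lam" if k: "k \<in> {..<m} - S" for k
  proof -
    have Mb: "\<bar>M j k\<bar> \<le> (1 - \<kappa>) * \<nu> * real n / l" if j: "j \<in> S" for j
    proof -
      have "l / (\<nu> * real n) * \<bar>M j k\<bar> \<le> 1 - \<kappa>"
        using incoh k j unfolding M_def l_def S_def by blast
      thus ?thesis using l_pos' nu_pos n_pos' by (simp add: field_simps)
    qed
    have "\<bar>\<Sum>j\<in>S. M j k * D j\<bar> \<le> (\<Sum>j\<in>S. \<bar>M j k\<bar> * \<bar>D j\<bar>)"
      by (rule order_trans[OF sum_abs]) (simp add: abs_mult)
    also have "\<dots> \<le> (\<Sum>j\<in>S. ((1 - \<kappa>) * \<nu> * real n / l) * \<bar>D j\<bar>)"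
      by (intro sum_mono mult_right_mono Mb) auto
    also have "\<dots> = ((1 - \<kappa>) * \<nu> * real n / l) * (\<Sum>j\<in>S. \<bar>D j\<bar>)"
      by (simp add: sum_distrib_left)
    also have "\<dots> \<le> ((1 - \<kappa>) * \<nu> * real n / l) * T"
      using kappa nu_pos n_pos' l_pos' by (intro mult_left_mono sumD) auto
    also have "\<dots> = (1 - \<kappa>) * (1 + \<kappa> / 2) * real n * lam"
      using l_pos' nu_pos by (simp add: T_def field_simps)
    finally have s1: "\<bar>\<Sum>j\<in>S. M j k * D j\<bar> \<le> (1 - \<kappa>) * (1 + \<kappa> / 2) * real n * lam" .
    have e1: "\<bar>e k\<bar> \<le> \<kappa> * lam * real n / 2" using noise k by (auto simp: e_def)
    have "\<bar>c k\<bar> \<le> \<kappa> * lam * real n / 2 + (1 - \<kappa>) * (1 + \<kappa> / 2) * real n * lam"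
      using cdec[of k] e1 s1 by (simp add: abs_diff_le_iff abs_le_iff) linarith
    also have "\<dots> = real n * lam * (1 - \<kappa>\<^sup>2 / 2)" by (simp add: field_simps power2_eq_square)
    also have "\<dots> < real n * lam * 1"
      using n_pos' lam_pos kappa by (intro mult_strict_left_mono) auto
    finally show ?thesis by simp
  qed
  define N where "N = {..<m} - S"
  have key: "2 * real n * (L \<gamma> - L bh) =
      2 * (- (\<Sum>k\<in>S. (\<gamma> k - bh k) * c k) + real n * lam * (\<Sum>k\<in>S. \<bar>bh k + (\<gamma> k - bh k)\<bar> - \<bar>bh k\<bar>))
      + 2 * (\<Sum>k\<in>N. real n * lam * \<bar>\<gamma> k - bh k\<bar> - (\<gamma> k - bh k) * c k)
      + (\<Sum>i<n. (\<Sum>k<m. H i k * (\<gamma> k - bh k))\<^sup>2)" for \<gamma>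
  proof -
    define d where "d k = \<gamma> k - bh k" for k
    have g: "\<gamma> = (\<lambda>k. bh k + d k)" by (simp add: d_def)
    define A where "A = (\<Sum>i<n. (\<Sum>k<m. H i k * d k)\<^sup>2)"
    have Q: "(\<Sum>i<n. (y i - (\<Sum>k<m. H i k * \<gamma> k))\<^sup>2) =
        (\<Sum>i<n. (y i - (\<Sum>k<m. H i k * bh k))\<^sup>2) - 2 * (\<Sum>k<m. d k * c k) + A"
      unfolding g A_def c_def by (rule quad_expand)
    have N1: "(\<Sum>k<m. \<bar>\<gamma> k\<bar>) - (\<Sum>k<m. \<bar>bh k\<bar>) = (\<Sum>k\<in>S. \<bar>bh k + d k\<bar> - \<bar>bh k\<bar>) + (\<Sum>k\<in>N. \<bar>d k\<bar>)"
    proof -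
      have "(\<Sum>k<m. \<bar>\<gamma> k\<bar>) - (\<Sum>k<m. \<bar>bh k\<bar>) = (\<Sum>k<m. \<bar>bh k + d k\<bar> - \<bar>bh k\<bar>)"
        by (simp add: g sum_subtractf)
      also have "\<dots> = (\<Sum>k\<in>S. \<bar>bh k + d k\<bar> - \<bar>bh k\<bar>) + (\<Sum>k\<in>N. \<bar>bh k + d k\<bar> - \<bar>bh k\<bar>)"
        unfolding N_def by (rule split_sum[OF Sm])
      also have "(\<Sum>k\<in>N. \<bar>bh k + d k\<bar> - \<bar>bh k\<bar>) = (\<Sum>k\<in>N. \<bar>d k\<bar>)"
        using bhS by (intro sum.cong) (auto simp: N_def)
      finally show ?thesis .
    qed
    have Sc: "(\<Sum>k<m. d k * c k) = (\<Sum>k\<in>S. d k * c k) + (\<Sum>k\<in>N. d k * c k)"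
      unfolding N_def by (rule split_sum[OF Sm])
    have "2 * real n * (L \<gamma> - L bh) = (\<Sum>i<n. (y i - (\<Sum>k<m. H i k * \<gamma> k))\<^sup>2) - (\<Sum>i<n. (y i - (\<Sum>k<m. H i k * bh k))\<^sup>2)
        + 2 * real n * lam * ((\<Sum>k<m. \<bar>\<gamma> k\<bar>) - (\<Sum>k<m. \<bar>bh k\<bar>))"
      unfolding L_def using n_pos' by (simp add: field_simps)
    also have "\<dots> = - 2 * (\<Sum>k<m. d k * c k) + A + 2 * real n * lam * ((\<Sum>k\<in>S. \<bar>bh k + d k\<bar> - \<bar>bh k\<bar>) + (\<Sum>k\<in>N. \<bar>d k\<bar>))"
      unfolding Q N1 by simp
    also have "\<dots> = 2 * (- (\<Sum>k\<in>S. d k * c k) + real n * lam * (\<Sum>k\<in>S. \<bar>bh k + d k\<bar> - \<bar>bh k\<bar>))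
      + 2 * (\<Sum>k\<in>N. real n * lam * \<bar>d k\<bar> - d k * c k) + A"
      unfolding Sc by (simp add: algebra_simps sum_subtractf sum_distrib_left sum_negf)
    finally show ?thesis by (simp add: d_def A_def)
  qed
  have V0: "0 \<le> - (\<Sum>k\<in>S. (\<gamma> k - bh k) * c k) + real n * lam * (\<Sum>k\<in>S. \<bar>bh k + (\<gamma> k - bh k)\<bar> - \<bar>bh k\<bar>)" for \<gamma>
  proof -
    define dS where "dS k = (if k \<in> S then \<gamma> k - bh k else 0)" for k
    have "0 \<le> - (\<Sum>k<m. dS k * c k) + real n * lam * ((\<Sum>k<m. \<bar>bh k + dS k\<bar>) - (\<Sum>k<m. \<bar>bh k\<bar>))"
      by (rule VI) (simp add: dS_def)
    moreover have "(\<Sum>k<m. dS k * c k) = (\<Sum>k\<in>S. (\<gamma> k - bh k) * c k)"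
      using split_sum[OF Sm, of "\<lambda>k. dS k * c k"] by (simp add: dS_def)
    moreover have "(\<Sum>k<m. \<bar>bh k + dS k\<bar>) - (\<Sum>k<m. \<bar>bh k\<bar>) = (\<Sum>k\<in>S. \<bar>bh k + (\<gamma> k - bh k)\<bar> - \<bar>bh k\<bar>)"
      using split_sum[OF Sm, of "\<lambda>k. \<bar>bh k + dS k\<bar> - \<bar>bh k\<bar>"] by (simp add: dS_def sum_subtractf)
    ultimately show ?thesis by simp
  qed
  have finN: "finite N" by (simp add: N_def)
  have Nt: "(real n * lam - \<bar>c k\<bar>) * \<bar>\<gamma> k - bh k\<bar> \<le> real n * lam * \<bar>\<gamma> k - bh k\<bar> - (\<gamma> k - bh k) * c k" for \<gamma> k
  proof -
    have "(\<gamma> k - bh k) * c k \<le> \<bar>c k\<bar> * \<bar>\<gamma> k - bh k\<bar>"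
      by (metis abs_ge_self abs_mult mult.commute)
    thus ?thesis by (simp add: algebra_simps)
  qed
  have Nt0: "0 \<le> real n * lam * \<bar>\<gamma> k - bh k\<bar> - (\<gamma> k - bh k) * c k" if k: "k \<in> N" for \<gamma> k
    using Nt[of k \<gamma>] cN[of k] k unfolding N_def
    by (smt (verit) abs_ge_zero mult_nonneg_nonneg)
  have A0: "0 \<le> (\<Sum>i<n. (\<Sum>k<m. H i k * (\<gamma> k - bh k))\<^sup>2)" for \<gamma>
    by (intro sum_nonneg) auto
  have glob: "L bh \<le> L \<gamma>" for \<gamma>
  proof -
    have "0 \<le> 2 * real n * (L \<gamma> - L bh)"
      unfolding key using V0[of \<gamma>] A0[of \<gamma>] sum_nonneg[of N "\<lambda>k. real n * lam * \<bar>\<gamma> k - bh k\<bar> - (\<gamma> k - bh k) * c k", OF Nt0[of _ \<gamma>]]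
      by simp
    thus ?thesis using n_pos' by (simp add: zero_le_mult_iff)
  qed
  have uniq: "\<gamma> = bh" if gm: "\<gamma> \<in> vecs m" and gmin: "\<forall>\<gamma>'\<in>vecs m. L \<gamma> \<le> L \<gamma>'" for \<gamma>
  proof -
    have "L \<gamma> \<le> L bh" using gmin bhm by blast
    hence "2 * real n * (L \<gamma> - L bh) \<le> 0" using n_pos' by (simp add: mult_nonneg_nonpos)
    hence le: "2 * (\<Sum>k\<in>N. real n * lam * \<bar>\<gamma> k - bh k\<bar> - (\<gamma> k - bh k) * c k)
      + (\<Sum>i<n. (\<Sum>k<m. H i k * (\<gamma> k - bh k))\<^sup>2) \<le> 0"
    proof -
      have ar: "\<And>a b c :: real. 2 * a + 2 * b + c \<le> 0 \<Longrightarrow> 0 \<le> a \<Longrightarrow> 2 * b + c \<le> 0" by linarith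
      show ?thesis by (rule ar[OF _ V0[of \<gamma>]]) (use \<open>2 * real n * (L \<gamma> - L bh) \<le> 0\<close> in \<open>simp only: key\<close>)
    qed
    have Ns0: "0 \<le> (\<Sum>k\<in>N. real n * lam * \<bar>\<gamma> k - bh k\<bar> - (\<gamma> k - bh k) * c k)"
      by (intro sum_nonneg Nt0)
    have Nsz: "(\<Sum>k\<in>N. real n * lam * \<bar>\<gamma> k - bh k\<bar> - (\<gamma> k - bh k) * c k) = 0"
      using le Ns0 A0[of \<gamma>] by linarith
    have Az: "(\<Sum>i<n. (\<Sum>k<m. H i k * (\<gamma> k - bh k))\<^sup>2) = 0"
      using le Ns0 A0[of \<gamma>] by linarith
    have dN: "\<gamma> k - bh k = 0" if k: "k \<in> N" for k
    proof -
      have "real n * lam * \<bar>\<gamma> k - bh k\<bar> - (\<gamma> k - bh k) * c k = 0"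
        using Nsz sum_nonneg_eq_0_iff[OF finN, of "\<lambda>k. real n * lam * \<bar>\<gamma> k - bh k\<bar> - (\<gamma> k - bh k) * c k"] Nt0 k by blast
      hence "(real n * lam - \<bar>c k\<bar>) * \<bar>\<gamma> k - bh k\<bar> \<le> 0" using Nt[of k \<gamma>] by simp
      moreover have "real n * lam - \<bar>c k\<bar> > 0" using cN[of k] k by (simp add: N_def)
      ultimately show ?thesis by (simp add: mult_le_0_iff)
    qed
    have "(\<Sum>k<m. H i k * (\<gamma> k - bh k)) = (\<Sum>k\<in>S. H i k * (\<gamma> k - bh k))" for i
      using split_sum[OF Sm, of "\<lambda>k. H i k * (\<gamma> k - bh k)"] dN by (simp add: N_def)
    hence "(\<Sum>i<n. (\<Sum>k\<in>S. H i k * (\<gamma> k - bh k))\<^sup>2) = 0" using Az by simp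
    hence "real n * \<nu> * (\<Sum>k\<in>S. (\<gamma> k - bh k)\<^sup>2) \<le> 0"
      using eig[rule_format, of "\<lambda>k. \<gamma> k - bh k"] unfolding S_def by simp
    hence "(\<Sum>k\<in>S. (\<gamma> k - bh k)\<^sup>2) \<le> 0"
      using n_pos' nu_pos by (simp add: mult_le_0_iff)
    hence "(\<Sum>k\<in>S. (\<gamma> k - bh k)\<^sup>2) = 0" by (smt (verit) sum_nonneg zero_le_power2)
    hence dS: "\<gamma> k - bh k = 0" if "k \<in> S" for k
      using sum_nonneg_eq_0_iff[OF finS, of "\<lambda>k. (\<gamma> k - bh k)\<^sup>2"] that by simp
    show ?thesis
    proof
      fix k
      show "\<gamma> k = bh k"
      proof (cases "k < m")
        case True thus ?thesis using dS dN by (cases "k \<in> S") (auto simp: N_def)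
      next
        case False thus ?thesis using gm bhm by (simp add: vecs_def)
      qed
    qed
  qed
  show ?thesis
  proof (intro exI conjI ballI allI impI)
    show "bh \<in> vecs m" by (rule bhm)
    show "L bh \<le> L \<gamma>" for \<gamma> by (rule glob)
    show "\<gamma> = bh" if "\<gamma> \<in> vecs m \<and> (\<forall>\<gamma>'\<in>vecs m. L \<gamma> \<le> L \<gamma>')" for \<gamma>
      using uniq that by blast
    show "supp bh \<subseteq> supp \<beta>s" using bhS by (auto simp: supp_def S_def)
    show "\<bar>bh k - \<beta>s k\<bar> \<le> (1 + \<kappa> / 2) * sqrt (real (card (supp \<beta>s))) * lam / \<nu>"
      if "k \<in> supp \<beta>s" for k
      using Dk[of k] that by (simp add: D_def Bd_def l_def S_def)
  qed
qed


theorem lemma9: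
  fixes n m :: nat and x :: "nat \<Rightarrow> 'a" and f :: "'a \<Rightarrow> real"
    and h :: "nat \<Rightarrow> 'a \<Rightarrow> real" and \<beta>s :: "nat \<Rightarrow> real"
    and lam \<nu> \<kappa> :: real
  assumes n_pos: "n \<ge> 1"
    and \<beta>s_vec: "\<beta>s \<in> vecs m"
    and l_pos: "card (supp \<beta>s) \<ge> 1"
    and lam_pos: "lam > 0"
    and nu_pos: "\<nu> > 0"
    and eig: "\<forall>u :: nat \<Rightarrow> real.
       (\<Sum>i<n. (\<Sum>j\<in>supp \<beta>s. Hc n x h i j * u j)\<^sup>2)
         \<ge> real n * \<nu> * (\<Sum>j\<in>supp \<beta>s. (u j)\<^sup>2)"
    and kappa: "0 < \<kappa>" "\<kappa> \<le> 1"
    and incoh: "\<forall>k\<in>{..<m} - supp \<beta>s. \<forall>j\<in>supp \<beta>s.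
       real (card (supp \<beta>s)) / (\<nu> * real n) * \<bar>\<Sum>i<n. Hc n x h i j * Hc n x h i k\<bar> \<le> 1 - \<kappa>"
    and noise: "\<forall>k<m. \<bar>\<Sum>i<n. Hc n x h i k *
        (fc n x f i - (\<Sum>j<m. Hc n x h i j * \<beta>s j))\<bar> \<le> \<kappa> * lam * real n / 2"
  shows "\<exists>\<beta>. is_lasso_min n m x f h lam \<beta>
     \<and> (\<forall>\<gamma>. is_lasso_min n m x f h lam \<gamma> \<longrightarrow> \<gamma> = \<beta>)
     \<and> supp \<beta> \<subseteq> supp \<beta>s
     \<and> (\<forall>k\<in>supp \<beta>s. \<bar>\<beta> k - \<beta>s k\<bar>
          \<le> (1 + \<kappa> / 2) * sqrt (real (card (supp \<beta>s))) * lam / \<nu>)"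
  proof -
  have "\<exists>\<beta>. (\<beta> \<in> vecs m \<and> (\<forall>\<gamma>\<in>vecs m. lasso_obj n m x f h lam \<beta> \<le> lasso_obj n m x f h lam \<gamma>))
     \<and> (\<forall>\<gamma>. (\<gamma> \<in> vecs m \<and> (\<forall>\<gamma>'\<in>vecs m. lasso_obj n m x f h lam \<gamma> \<le> lasso_obj n m x f h lam \<gamma>')) \<longrightarrow> \<gamma> = \<beta>)
     \<and> supp \<beta> \<subseteq> supp \<beta>s
     \<and> (\<forall>k\<in>supp \<beta>s. \<bar>\<beta> k - \<beta>s k\<bar>
          \<le> (1 + \<kappa> / 2) * sqrt (real (card (supp \<beta>s))) * lam / \<nu>)"
    unfolding lasso_obj_def
    by (rule main[where H="Hc n x h" and y="fc n x f"]) (use assms in auto)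
  thus ?thesis unfolding is_lasso_min_def .
qed

end
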